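(* Let $\beta\ge1$. For nonzero $x,y\in\mathbb R^m$ (any $m\ge1$) define $$\cos_{(\beta,\infty)}(x,y)=\Big\langle\Big(\frac{x}{\|x\|_\infty}\Big)^{\ominus\beta},\frac{\mathrm{sign}_\infty(y)}{\|\mathrm{sign}_\infty(y)\|_1}\Big\rangle,$$ where the $i$-th component of $\mathrm{sign}_\infty(y)$ is $\mathrm{sign}(y_i)\,\mathbb I(|y_i|=\|y\|_\infty)$. Let $x=(x_0,x_1)$ and $y=(y_0,y_1)$ with $x_0,y_0\in\mathbb R^{d_0}$ and $x_1,y_1\in\mathbb R^{d_1}$, $d=d_0+d_1$. If $\|x_0\|_\infty>\|x_1\|_\infty$ and $\|y_0\|_\infty>\|y_1\|_\infty$, then $\cos_{(\beta,\infty)}(x_0,y_0)=\cos_{(\beta,\infty)}(x,y)$.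
   Context: $\langle\cdot,\cdot\rangle$ is the Euclidean inner product; $\|v\|_\infty=\max_i|v_i|$, $\|v\|_1=\sum_i|v_i|$. For a vector $v$, $v^{\ominus\beta}$ is taken componentwise with $t^{\ominus\beta}=\mathrm{sign}(t)|t|^\beta$, $\mathrm{sign}(0)=0$; $\mathbb I$ is the indicator function. $\cos_{(\beta,\infty)}$ is the limit as $\gamma\to\infty$ of the $(\beta,\gamma)$-cosine $\langle(x/\|x\|_{\beta+\gamma})^{\ominus\beta},(y/\|y\|_{\beta+\gamma})^{\ominus\gamma}\rangle$. *)

theory Defs
  imports Complex_Main
begin

text \<open>Vectors in R^n are represented as functions nat => real; only the components
  with index i < n matter.\<close>

definition sgnpow :: "real \<Rightarrow> real \<Rightarrow> real" where
  "sgnpow t b = sgn t * \<bar>t\<bar> powr b"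

definition norm_inf :: "nat \<Rightarrow> (nat \<Rightarrow> real) \<Rightarrow> real" where
  "norm_inf n x = Max (insert 0 ((\<lambda>i. \<bar>x i\<bar>) ` {..<n}))"

definition norm1 :: "nat \<Rightarrow> (nat \<Rightarrow> real) \<Rightarrow> real" where
  "norm1 n x = (\<Sum>i<n. \<bar>x i\<bar>)"

definition sign_inf :: "nat \<Rightarrow> (nat \<Rightarrow> real) \<Rightarrow> nat \<Rightarrow> real" where
  "sign_inf n y i = sgn (y i) * (if \<bar>y i\<bar> = norm_inf n y then 1 else 0)"

definition cos_binf :: "nat \<Rightarrow> real \<Rightarrow> (nat \<Rightarrow> real) \<Rightarrow> (nat \<Rightarrow> real) \<Rightarrow> real" where
  "cos_binf n b x y =
     (\<Sum>i<n. sgnpow (x i / norm_inf n x) b * (sign_inf n y i / norm1 n (sign_inf n y)))"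

definition vconcat :: "nat \<Rightarrow> (nat \<Rightarrow> real) \<Rightarrow> (nat \<Rightarrow> real) \<Rightarrow> nat \<Rightarrow> real" where
  "vconcat d0 x0 x1 i = (if i < d0 then x0 i else x1 (i - d0))"

end

theory Submission
  imports Defs
begin

lemma ni_ge: "i < n \<Longrightarrow> \<bar>x i\<bar> \<le> norm_inf n x"
  unfolding norm_inf_def by (rule Max_ge) auto

lemma ni_nonneg: "0 \<le> norm_inf n x"
  unfolding norm_inf_def by (rule Max_ge) auto

lemma ni_le: "0 \<le> c \<Longrightarrow> (\<And>i. i < n \<Longrightarrow> \<bar>x i\<bar> \<le> c) \<Longrightarrow> norm_inf n x \<le> c"
  unfolding norm_inf_def by (subst Max_le_iff) auto

lemma ni_concat:
  assumes "norm_inf d0 x0 > norm_inf d1 x1"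
  shows "norm_inf (d0 + d1) (vconcat d0 x0 x1) = norm_inf d0 x0"
proof (rule antisym)
  show "norm_inf (d0 + d1) (vconcat d0 x0 x1) \<le> norm_inf d0 x0"
  proof (rule ni_le)
    show "0 \<le> norm_inf d0 x0" by (rule ni_nonneg)
    fix i assume i: "i < d0 + d1"
    show "\<bar>vconcat d0 x0 x1 i\<bar> \<le> norm_inf d0 x0"
    proof (cases "i < d0")
      case True thus ?thesis by (simp add: vconcat_def ni_ge)
    next
      case False
      hence "i - d0 < d1" using i by auto
      hence "\<bar>x1 (i - d0)\<bar> \<le> norm_inf d1 x1" by (rule ni_ge)
      thus ?thesis using False assms by (simp add: vconcat_def)
    qed
  qed
next
  show "norm_inf d0 x0 \<le> norm_inf (d0 + d1) (vconcat d0 x0 x1)"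
  proof (rule ni_le)
    show "0 \<le> norm_inf (d0 + d1) (vconcat d0 x0 x1)" by (rule ni_nonneg)
    fix i assume i: "i < d0"
    have "\<bar>vconcat d0 x0 x1 i\<bar> \<le> norm_inf (d0 + d1) (vconcat d0 x0 x1)"
      using i by (intro ni_ge) auto
    thus "\<bar>x0 i\<bar> \<le> norm_inf (d0 + d1) (vconcat d0 x0 x1)" using i by (simp add: vconcat_def)
  qed
qed

lemma sign_concat1:
  assumes "norm_inf d0 y0 > norm_inf d1 y1" "i < d0"
  shows "sign_inf (d0 + d1) (vconcat d0 y0 y1) i = sign_inf d0 y0 i"
  using assms ni_concat[OF assms(1)] by (simp add: sign_inf_def vconcat_def)

lemma sign_concat2:
  assumes "norm_inf d0 y0 > norm_inf d1 y1" "d0 \<le> i" "i < d0 + d1"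
  shows "sign_inf (d0 + d1) (vconcat d0 y0 y1) i = 0"
proof -
  have "i - d0 < d1" using assms by auto
  hence "\<bar>y1 (i - d0)\<bar> \<le> norm_inf d1 y1" by (rule ni_ge)
  thus ?thesis using assms ni_concat[OF assms(1)] by (simp add: sign_inf_def vconcat_def)
qed

lemma split_sum: "(\<Sum>i<(d0::nat) + d1. (f i::real)) = (\<Sum>i<d0. f i) + (\<Sum>i\<in>{d0..<d0+d1}. f i)"
  using sum.atLeastLessThan_concat[of 0 d0 "d0+d1" f] by (simp add: atLeast0LessThan)

theorem mainTheorem13:
  fixes b :: real and d0 d1 :: nat and x0 x1 y0 y1 :: "nat \<Rightarrow> real"
  assumes "b \<ge> 1"
    and "norm_inf d0 x0 > norm_inf d1 x1"
    and "norm_inf d0 y0 > norm_inf d1 y1"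
  shows "cos_binf d0 b x0 y0 = cos_binf (d0 + d1) b (vconcat d0 x0 x1) (vconcat d0 y0 y1)"
proof -
  let ?s = "sign_inf (d0 + d1) (vconcat d0 y0 y1)"
  have z: "\<And>i. i \<in> {d0..<d0+d1} \<Longrightarrow> ?s i = 0" using sign_concat2[OF assms(3)] by auto
  have f: "\<And>i. i < d0 \<Longrightarrow> ?s i = sign_inf d0 y0 i" using sign_concat1[OF assms(3)] by auto
  have n1: "norm1 (d0 + d1) ?s = norm1 d0 (sign_inf d0 y0)"
    unfolding norm1_def split_sum using z f by simp
  show ?thesis
    unfolding cos_binf_def split_sum ni_concat[OF assms(2)] n1
    using z f by (simp add: vconcat_def)
qed

end
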